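(* Let $b\colon\mathbb N_0\to(0,\infty)$ and $d\colon\mathbb N_0\to[0,\infty)$ satisfy $\sum_{i\ge0}\frac1{b(i)+d(i)}=\infty$, $\sum_{i\ge0}\frac{d(i)}{b(i)+d(i)}=\infty$ and $\sum_{i\ge0}\frac1{(b(i)+d(i))^2}<\infty$, and suppose $\lim_{i\to\infty}d(i)=d^*\in[0,R)$ where $R=\inf_{i\in\mathbb N_0}(b(i)+d(i))$. Suppose that for $\lambda^*>0$ there is a function $r\colon(0,\infty)\to\mathbb R_+$ with $\mathcal K_\alpha\big(\tfrac{\lambda^*}{\lambda^*+d^*}t-\tfrac1{\lambda^*+d^*}\mathcal K_\alpha(r(t))\big)-\mathcal K_\alpha(r(t))=\mathcal O(1)$. Then $\sup_{t\ge0}\big|\log\mathbb P(L>t)+d^*t+\mathcal K_\alpha(t)\big|<\infty$.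
   Context: Let $(E_i)_{i\in\mathbb N_0}$ be independent with $E_i\sim\mathrm{Exp}(b(i)+d(i))$, $S_k=\sum_{i=0}^{k-1}E_i$, and independently let $(B_i)_{i\in\mathbb N_0}$ be independent Bernoulli with $\mathbb P(B_i=1)=\frac{b(i)}{b(i)+d(i)}$, $D=\inf\{i:B_i=0\}$; the lifetime is $L=S_{D+1}$. $\varphi_1(k)=\sum_{i=0}^{k-1}\frac1{b(i)+d(i)}$, $\alpha(k)=\sum_{i=0}^{k-1}\frac{d(i)-d^*}{b(i)+d(i)}$, both extended to $\mathbb R_+$ by linear interpolation ($\varphi_1$ is then strictly increasing and invertible), and $\mathcal K_\alpha(t)=\alpha(\varphi_1^{-1}(t))$. *)

theory Defs
  imports "HOL-Probability.Probability" "HOL-Library.Landau_Symbols"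
begin

definition lin_interp :: "(nat \<Rightarrow> real) \<Rightarrow> real \<Rightarrow> real" where
  "lin_interp f x = f (nat \<lfloor>x\<rfloor>) + (x - of_int \<lfloor>x\<rfloor>) * (f (Suc (nat \<lfloor>x\<rfloor>)) - f (nat \<lfloor>x\<rfloor>))"

definition phi1 :: "(nat \<Rightarrow> real) \<Rightarrow> (nat \<Rightarrow> real) \<Rightarrow> real \<Rightarrow> real" where
  "phi1 b d = lin_interp (\<lambda>k. \<Sum>i<k. 1 / (b i + d i))"

definition alpha_fun :: "(nat \<Rightarrow> real) \<Rightarrow> (nat \<Rightarrow> real) \<Rightarrow> real \<Rightarrow> real \<Rightarrow> real" where
  "alpha_fun b d dstar = lin_interp (\<lambda>k. \<Sum>i<k. (d i - dstar) / (b i + d i))"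

definition K_alpha :: "(nat \<Rightarrow> real) \<Rightarrow> (nat \<Rightarrow> real) \<Rightarrow> real \<Rightarrow> real \<Rightarrow> real" where
  "K_alpha b d dstar t = alpha_fun b d dstar (the_inv_into {0..} (phi1 b d) t)"

definition first_death :: "(nat \<Rightarrow> 'a \<Rightarrow> real) \<Rightarrow> 'a \<Rightarrow> nat" where
  "first_death B \<omega> = (LEAST i. B i \<omega> = 0)"

definition lifetime :: "(nat \<Rightarrow> 'a \<Rightarrow> real) \<Rightarrow> (nat \<Rightarrow> 'a \<Rightarrow> real) \<Rightarrow> 'a \<Rightarrow> real" where
  "lifetime E B \<omega> = (\<Sum>i\<le>first_death B \<omega>. E i \<omega>)"

end

theory Submission
  imports Defs
begin


lemma mgf_exp:
  assumes P: "prob_space M" and D: "distributed M lborel X (exponential_density l)"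
    and l: "0 < l" and s: "s < l"
  shows "(\<integral>\<^sup>+\<omega>. ennreal (exp (s * X \<omega>)) \<partial>M) = ennreal (l / (l - s))"
proof -
  have "(\<integral>\<^sup>+\<omega>. ennreal (exp (s * X \<omega>)) \<partial>M) = (\<integral>\<^sup>+x. ennreal (exponential_density l x) * ennreal (exp (s * x)) \<partial>lborel)"
    by (rule distributed_nn_integral[OF D, symmetric]) simp
  also have "\<dots> = (\<integral>\<^sup>+x. ennreal (l / (l - s)) * ennreal (exponential_density (l - s) x) \<partial>lborel)"
  proof (intro nn_integral_cong)
    fix x :: real
    show "ennreal (exponential_density l x) * ennreal (exp (s * x)) = ennreal (l / (l - s)) * ennreal (exponential_density (l - s) x)"
    proof (cases "x < 0")
      case True then show ?thesis by (simp add: exponential_density_def)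
    next
      case False
      have "exponential_density l x * exp (s * x) = l / (l - s) * exponential_density (l - s) x"
        using False l s by (simp add: exponential_density_def field_simps flip: exp_add)
      then show ?thesis using False l s
        by (simp add: ennreal_mult'[symmetric] exponential_density_def)
    qed
  qed
  also have "\<dots> = ennreal (l / (l - s)) * (\<integral>\<^sup>+x. ennreal (exponential_density (l - s) x) \<partial>lborel)"
    by (rule nn_integral_cmult) simp
  also have "(\<integral>\<^sup>+x. ennreal (exponential_density (l - s) x) \<partial>lborel) = 1"
    using nn_integral_erlang_ith_moment[of "l - s" 0 0] s by simp
  finally show ?thesis by simp
qed

locale bdp = prob_space M for M :: "'a measure" +
  fixes E B :: "nat \<Rightarrow> 'a \<Rightarrow> real" and b d :: "nat \<Rightarrow> real"
  assumes indep: "indep_vars (\<lambda>_. borel) (case_sum E B) UNIV"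
    and E_distr: "\<And>i. distributed M lborel (E i) (exponential_density (b i + d i))"
    and B_meas[measurable]: "\<And>i. B i \<in> borel_measurable M"
    and B_01: "\<And>i \<omega>. \<omega> \<in> space M \<Longrightarrow> B i \<omega> \<in> {0, 1}"
    and B_prob: "\<And>i. measure M {\<omega> \<in> space M. B i \<omega> = 1} = b i / (b i + d i)"
    and b_pos: "\<And>i. b i > 0"
    and d_nonneg: "\<And>i. d i \<ge> 0"
begin

lemma E_meas[measurable]: "E i \<in> borel_measurable M"
  using distributed_measurable[OF E_distr[of i]] by simp

lemma indep_nn:
  fixes F :: "nat + nat \<Rightarrow> real \<Rightarrow> real"
  assumes K: "finite K" and Fm: "\<And>x. F x \<in> borel_measurable borel" and F0: "\<And>x y. F x y \<ge> 0"
  shows "(\<integral>\<^sup>+\<omega>. ennreal (\<Prod>x\<in>K. F x (case_sum E B x \<omega>)) \<partial>M)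
      = (\<Prod>x\<in>K. \<integral>\<^sup>+\<omega>. ennreal (F x (case_sum E B x \<omega>)) \<partial>M)"
proof -
  have ind: "indep_vars (\<lambda>_. borel) (\<lambda>x \<omega>. ennreal (F x (case_sum E B x \<omega>))) K"
    by (rule indep_vars_compose2[OF indep_vars_subset[OF indep]]) (auto intro: measurable_compose[OF Fm])
  have "(\<integral>\<^sup>+\<omega>. ennreal (\<Prod>x\<in>K. F x (case_sum E B x \<omega>)) \<partial>M)
      = (\<integral>\<^sup>+\<omega>. (\<Prod>x\<in>K. ennreal (F x (case_sum E B x \<omega>))) \<partial>M)"
    by (intro nn_integral_cong) (simp add: prod_ennreal F0)
  also have "\<dots> = (\<Prod>x\<in>K. \<integral>\<^sup>+\<omega>. ennreal (F x (case_sum E B x \<omega>)) \<partial>M)"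
    by (rule indep_vars_nn_integral[OF K ind]) simp
  finally show ?thesis .
qed

definition a :: "nat \<Rightarrow> real" where "a i = b i + d i"
definition p :: "nat \<Rightarrow> real" where "p i = b i / a i"
definition q :: "nat \<Rightarrow> real" where "q i = d i / a i"

lemma a_pos: "a i > 0" using b_pos[of i] d_nonneg[of i] by (simp add: a_def)
lemma pq: "p i + q i = 1" using a_pos[of i] unfolding p_def q_def by (simp add: a_def flip: add_divide_distrib)

lemma p_pos: "0 < p i" using a_pos[of i] b_pos[of i] by (simp add: p_def)
lemma q_nonneg: "0 \<le> q i" using a_pos[of i] d_nonneg[of i] by (simp add: q_def)
lemma p_le1: "p i \<le> 1" using pq[of i] q_nonneg[of i] by simp
lemma q_lt1: "q i < 1" using pq[of i] p_pos[of i] by simp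
lemma ratio_pos: "s < a i \<Longrightarrow> 0 < a i / (a i - s)" using a_pos[of i] by simp

lemma int_B1: "(\<integral>\<^sup>+\<omega>. ennreal (if B i \<omega> = 1 then 1 else 0) \<partial>M) = ennreal (p i)"
proof -
  have "(\<integral>\<^sup>+\<omega>. ennreal (if B i \<omega> = 1 then 1 else 0) \<partial>M) = (\<integral>\<^sup>+\<omega>. indicator {\<omega> \<in> space M. B i \<omega> = 1} \<omega> \<partial>M)"
    by (intro nn_integral_cong) (auto split: split_indicator)
  also have "\<dots> = emeasure M {\<omega> \<in> space M. B i \<omega> = 1}" by (rule nn_integral_indicator) measurable
  also have "\<dots> = ennreal (p i)" by (simp add: emeasure_eq_measure B_prob p_def a_def)
  finally show ?thesis .
qed

lemma int_B0: "(\<integral>\<^sup>+\<omega>. ennreal (if B i \<omega> = 0 then 1 else 0) \<partial>M) = ennreal (q i)"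
proof -
  have "(\<integral>\<^sup>+\<omega>. ennreal (if B i \<omega> = 0 then 1 else 0) \<partial>M) = (\<integral>\<^sup>+\<omega>. indicator (space M - {\<omega> \<in> space M. B i \<omega> = 1}) \<omega> \<partial>M)"
    by (intro nn_integral_cong) (use B_01 in \<open>fastforce split: split_indicator\<close>)
  also have "\<dots> = emeasure M (space M - {\<omega> \<in> space M. B i \<omega> = 1})" by (rule nn_integral_indicator) measurable
  also have "\<dots> = ennreal (1 - p i)" by (simp add: emeasure_eq_measure prob_compl B_prob p_def a_def)
  also have "1 - p i = q i" using pq[of i] by simp
  finally show ?thesis .
qed

lemma int_E: "s < a i \<Longrightarrow> (\<integral>\<^sup>+\<omega>. ennreal (exp (s * E i \<omega>)) \<partial>M) = ennreal (a i / (a i - s))"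
  using mgf_exp[OF prob_space_axioms E_distr[of i]] a_pos[of i] by (simp add: a_def)

definition pi :: "nat \<Rightarrow> real" where "pi k = (\<Prod>i<k. p i)"
definition mgf :: "real \<Rightarrow> nat \<Rightarrow> real" where "mgf s k = (\<Prod>i\<le>k. a i / (a i - s))"

lemma pi_pos: "0 < pi k" by (simp add: pi_def prod_pos p_pos)
lemma mgf_pos: "(\<And>i. s < a i) \<Longrightarrow> 0 < mgf s k" by (simp add: mgf_def prod_pos ratio_pos)

definition Fm :: "nat \<Rightarrow> real \<Rightarrow> nat + nat \<Rightarrow> real \<Rightarrow> real" where
  "Fm k s x y = (case x of Inl i \<Rightarrow> exp (s * y) | Inr i \<Rightarrow> (if i < k then (if y = 1 then 1 else 0) else (if y = 0 then 1 else 0)))"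

lemma Fm_meas: "Fm k s x \<in> borel_measurable borel"
  unfolding Fm_def by (cases x) auto

lemma master:
  assumes s: "\<And>i. s < a i"
  shows "(\<integral>\<^sup>+\<omega>. ennreal ((\<Prod>i<k. if B i \<omega> = 1 then 1 else 0) * (if B k \<omega> = 0 then 1 else 0) * exp (s * (\<Sum>i\<le>k. E i \<omega>))) \<partial>M)
    = ennreal (pi k * q k * mgf s k)"
proof -
  let ?K = "Inl ` {..k} \<union> Inr ` {..k}"
  have disj: "Inl ` {..k} \<inter> Inr ` {..k} = ({} :: (nat + nat) set)" by auto
  have eq1: "(\<Prod>i<k. if B i \<omega> = 1 then 1 else 0) * (if B k \<omega> = 0 then 1 else 0) * exp (s * (\<Sum>i\<le>k. E i \<omega>))
      = (\<Prod>x\<in>?K. Fm k s x (case_sum E B x \<omega>))" for \<omega>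
  proof -
    have "(\<Prod>x\<in>?K. Fm k s x (case_sum E B x \<omega>)) = (\<Prod>x\<in>Inl ` {..k}. Fm k s x (case_sum E B x \<omega>)) * (\<Prod>x\<in>Inr ` {..k}. Fm k s x (case_sum E B x \<omega>))"
      by (rule prod.union_disjoint) (auto)
    also have "(\<Prod>x\<in>Inl ` {..k}. Fm k s x (case_sum E B x \<omega>)) = (\<Prod>i\<le>k. exp (s * E i \<omega>))"
      by (subst prod.reindex) (auto simp: Fm_def)
    also have "\<dots> = exp (s * (\<Sum>i\<le>k. E i \<omega>))" by (simp add: exp_sum sum_distrib_left)
    also have "(\<Prod>x\<in>Inr ` {..k}. Fm k s x (case_sum E B x \<omega>)) = (\<Prod>i\<le>k. Fm k s (Inr i) (B i \<omega>))"
      by (subst prod.reindex) auto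
    also have "\<dots> = (\<Prod>i<k. Fm k s (Inr i) (B i \<omega>)) * Fm k s (Inr k) (B k \<omega>)"
      by (simp add: lessThan_Suc_atMost[symmetric])
    also have "(\<Prod>i<k. Fm k s (Inr i) (B i \<omega>)) = (\<Prod>i<k. if B i \<omega> = 1 then 1 else 0)"
      by (intro prod.cong) (auto simp: Fm_def)
    finally show ?thesis by (simp add: Fm_def)
  qed
  have "(\<integral>\<^sup>+\<omega>. ennreal ((\<Prod>i<k. if B i \<omega> = 1 then 1 else 0) * (if B k \<omega> = 0 then 1 else 0) * exp (s * (\<Sum>i\<le>k. E i \<omega>))) \<partial>M)
     = (\<integral>\<^sup>+\<omega>. ennreal (\<Prod>x\<in>?K. Fm k s x (case_sum E B x \<omega>)) \<partial>M)"
    by (simp only: eq1)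
  also have "\<dots> = (\<Prod>x\<in>?K. \<integral>\<^sup>+\<omega>. ennreal (Fm k s x (case_sum E B x \<omega>)) \<partial>M)"
    by (rule indep_nn[OF _ Fm_meas]) (auto simp: Fm_def split: sum.split)
  also have "\<dots> = (\<Prod>x\<in>Inl ` {..k}. \<integral>\<^sup>+\<omega>. ennreal (Fm k s x (case_sum E B x \<omega>)) \<partial>M) * (\<Prod>x\<in>Inr ` {..k}. \<integral>\<^sup>+\<omega>. ennreal (Fm k s x (case_sum E B x \<omega>)) \<partial>M)"
    by (rule prod.union_disjoint) auto
  also have "(\<Prod>x\<in>Inl ` {..k}. \<integral>\<^sup>+\<omega>. ennreal (Fm k s x (case_sum E B x \<omega>)) \<partial>M) = (\<Prod>i\<le>k. ennreal (a i / (a i - s)))"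
    by (subst prod.reindex) (auto simp: Fm_def int_E s intro!: prod.cong)
  also have "\<dots> = ennreal (mgf s k)"
    using s by (subst prod_ennreal) (auto simp: mgf_def less_imp_le[OF ratio_pos])
  also have "(\<Prod>x\<in>Inr ` {..k}. \<integral>\<^sup>+\<omega>. ennreal (Fm k s x (case_sum E B x \<omega>)) \<partial>M) = (\<Prod>i\<le>k. \<integral>\<^sup>+\<omega>. ennreal (Fm k s (Inr i) (B i \<omega>)) \<partial>M)"
    by (subst prod.reindex) auto
  also have "\<dots> = (\<Prod>i<k. \<integral>\<^sup>+\<omega>. ennreal (Fm k s (Inr i) (B i \<omega>)) \<partial>M) * (\<integral>\<^sup>+\<omega>. ennreal (Fm k s (Inr k) (B k \<omega>)) \<partial>M)"
    by (simp add: lessThan_Suc_atMost[symmetric])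
  also have "(\<Prod>i<k. \<integral>\<^sup>+\<omega>. ennreal (Fm k s (Inr i) (B i \<omega>)) \<partial>M) = (\<Prod>i<k. ennreal (p i))"
    by (intro prod.cong) (auto simp: Fm_def int_B1)
  also have "\<dots> = ennreal (pi k)"
    by (subst prod_ennreal) (auto simp: pi_def less_imp_le[OF p_pos])
  also have "(\<integral>\<^sup>+\<omega>. ennreal (Fm k s (Inr k) (B k \<omega>)) \<partial>M) = ennreal (q k)"
    by (simp add: Fm_def int_B0)
  finally show ?thesis
    using pi_pos[of k] mgf_pos[of s k, OF s] q_nonneg[of k]
    by (simp add: ennreal_mult mult_ac)
qed

lemma master0:
  "(\<integral>\<^sup>+\<omega>. ennreal (\<Prod>i<k. if B i \<omega> = 1 then 1 else 0) \<partial>M) = ennreal (pi k)"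
proof -
  have "(\<integral>\<^sup>+\<omega>. ennreal (\<Prod>i<k. if B i \<omega> = 1 then 1 else 0) \<partial>M) = (\<integral>\<^sup>+\<omega>. ennreal (\<Prod>x\<in>Inr ` {..<k}. Fm k 0 x (case_sum E B x \<omega>)) \<partial>M)"
    by (subst prod.reindex) (auto simp: Fm_def intro!: nn_integral_cong prod.cong)
  also have "\<dots> = (\<Prod>x\<in>Inr ` {..<k}. \<integral>\<^sup>+\<omega>. ennreal (Fm k 0 x (case_sum E B x \<omega>)) \<partial>M)"
    by (rule indep_nn[OF _ Fm_meas]) (auto simp: Fm_def split: sum.split)
  also have "\<dots> = (\<Prod>i<k. ennreal (p i))"
    by (subst prod.reindex) (auto simp: Fm_def int_B1 intro!: prod.cong)
  also have "\<dots> = ennreal (pi k)"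
    by (subst prod_ennreal) (auto simp: pi_def less_imp_le[OF p_pos])
  finally show ?thesis .
qed

definition H :: "nat \<Rightarrow> 'a set" where "H k = {\<omega>\<in>space M. \<forall>i<k. B i \<omega> = 1}"
definition G0 :: "nat \<Rightarrow> 'a set" where "G0 k = {\<omega>\<in>space M. (\<forall>i<k. B i \<omega> = 1) \<and> B k \<omega> = 0}"
definition G :: "nat \<Rightarrow> real \<Rightarrow> 'a set" where
  "G k t = {\<omega>\<in>space M. (\<forall>i<k. B i \<omega> = 1) \<and> B k \<omega> = 0 \<and> t < (\<Sum>i\<le>k. E i \<omega>)}"
definition G' :: "nat \<Rightarrow> real \<Rightarrow> 'a set" where
  "G' k t = {\<omega>\<in>space M. (\<forall>i<k. B i \<omega> = 1) \<and> B k \<omega> = 0 \<and> (\<Sum>i\<le>k. E i \<omega>) \<le> t}"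

lemma H_sets[measurable]: "H k \<in> sets M" unfolding H_def by measurable
lemma G0_sets[measurable]: "G0 k \<in> sets M" unfolding G0_def by measurable
lemma G_sets[measurable]: "G k t \<in> sets M" unfolding G_def by measurable
lemma G'_sets[measurable]: "G' k t \<in> sets M" unfolding G'_def by measurable

lemma ind_prod_eq: "(\<Prod>i<k. if B i \<omega> = 1 then 1 else (0::real)) = (if \<forall>i<k. B i \<omega> = 1 then 1 else 0)"
  by (induction k) (auto simp: less_Suc_eq)

lemma ind_prod_nonneg: "0 \<le> (\<Prod>i<k. if B i \<omega> = 1 then 1 else (0::real))"
  by (rule prod_nonneg) auto

lemma measure_H: "measure M (H k) = pi k"
proof -
  have "emeasure M (H k) = (\<integral>\<^sup>+\<omega>. indicator (H k) \<omega> \<partial>M)" by (simp add: nn_integral_indicator)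
  also have "\<dots> = (\<integral>\<^sup>+\<omega>. ennreal (\<Prod>i<k. if B i \<omega> = 1 then 1 else 0) \<partial>M)"
    by (intro nn_integral_cong) (auto simp: H_def ind_prod_eq split: split_indicator)
  also have "\<dots> = ennreal (pi k)" by (rule master0)
  finally show ?thesis using pi_pos[of k] by (simp add: emeasure_eq_measure)
qed

lemma measure_G0: "measure M (G0 k) = pi k * q k"
proof -
  have "emeasure M (G0 k) = (\<integral>\<^sup>+\<omega>. indicator (G0 k) \<omega> \<partial>M)" by (simp add: nn_integral_indicator)
  also have "\<dots> = (\<integral>\<^sup>+\<omega>. ennreal ((\<Prod>i<k. if B i \<omega> = 1 then 1 else 0) * (if B k \<omega> = 0 then 1 else 0) * exp (0 * (\<Sum>i\<le>k. E i \<omega>))) \<partial>M)"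
    by (intro nn_integral_cong) (auto simp: G0_def ind_prod_eq split: split_indicator)
  also have "\<dots> = ennreal (pi k * q k * mgf 0 k)" by (rule master) (simp add: a_pos)
  also have "mgf 0 k = 1" using a_pos by (simp add: mgf_def less_imp_neq[symmetric])
  finally show ?thesis using pi_pos[of k] q_nonneg[of k] by (simp add: emeasure_eq_measure)
qed

lemma measure_G_upper:
  assumes s0: "0 \<le> s" and s: "\<And>i. s < a i"
  shows "measure M (G k t) \<le> pi k * q k * mgf s k * exp (- s * t)"
proof -
  have "emeasure M (G k t) = (\<integral>\<^sup>+\<omega>. indicator (G k t) \<omega> \<partial>M)" by (simp add: nn_integral_indicator)
  also have "\<dots> \<le> (\<integral>\<^sup>+\<omega>. ennreal (exp (- s * t)) * ennreal ((\<Prod>i<k. if B i \<omega> = 1 then 1 else 0) * (if B k \<omega> = 0 then 1 else 0) * exp (s * (\<Sum>i\<le>k. E i \<omega>))) \<partial>M)"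
  proof (intro nn_integral_mono)
    fix \<omega> assume "\<omega> \<in> space M"
    show "indicator (G k t) \<omega> \<le> ennreal (exp (- s * t)) * ennreal ((\<Prod>i<k. if B i \<omega> = 1 then 1 else 0) * (if B k \<omega> = 0 then 1 else 0) * exp (s * (\<Sum>i\<le>k. E i \<omega>)))"
    proof (cases "\<omega> \<in> G k t")
      case True
      then have "t < (\<Sum>i\<le>k. E i \<omega>)" "(\<forall>i<k. B i \<omega> = 1)" "B k \<omega> = 0" by (auto simp: G_def)
      then have "1 \<le> exp (- s * t) * ((\<Prod>i<k. if B i \<omega> = 1 then 1 else 0) * (if B k \<omega> = 0 then 1 else 0) * exp (s * (\<Sum>i\<le>k. E i \<omega>)))"
        using s0 by (simp add: mult_left_mono flip: exp_add)
      then show ?thesis using True by (simp add: ennreal_mult[symmetric] ind_prod_nonneg)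
    qed simp
  qed
  also have "\<dots> = ennreal (exp (- s * t)) * ennreal (pi k * q k * mgf s k)"
    by (subst nn_integral_cmult) (simp_all add: master s)
  finally show ?thesis using pi_pos[of k] q_nonneg[of k] mgf_pos[of s k, OF s]
    by (simp add: emeasure_eq_measure ennreal_mult[symmetric] mult_ac)
qed

lemma measure_G'_upper:
  shows "measure M (G' k t) \<le> pi k * q k * mgf (-1) k * exp t"
proof -
  have s: "\<And>i. -1 < a i" using a_pos by (smt (verit))
  have "emeasure M (G' k t) = (\<integral>\<^sup>+\<omega>. indicator (G' k t) \<omega> \<partial>M)" by (simp add: nn_integral_indicator)
  also have "\<dots> \<le> (\<integral>\<^sup>+\<omega>. ennreal (exp t) * ennreal ((\<Prod>i<k. if B i \<omega> = 1 then 1 else 0) * (if B k \<omega> = 0 then 1 else 0) * exp (-1 * (\<Sum>i\<le>k. E i \<omega>))) \<partial>M)"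
  proof (intro nn_integral_mono)
    fix \<omega> assume "\<omega> \<in> space M"
    show "indicator (G' k t) \<omega> \<le> ennreal (exp t) * ennreal ((\<Prod>i<k. if B i \<omega> = 1 then 1 else 0) * (if B k \<omega> = 0 then 1 else 0) * exp (-1 * (\<Sum>i\<le>k. E i \<omega>)))"
    proof (cases "\<omega> \<in> G' k t")
      case True
      then have "(\<Sum>i\<le>k. E i \<omega>) \<le> t" "(\<forall>i<k. B i \<omega> = 1)" "B k \<omega> = 0" by (auto simp: G'_def)
      then have "1 \<le> exp t * ((\<Prod>i<k. if B i \<omega> = 1 then 1 else 0) * (if B k \<omega> = 0 then 1 else 0) * exp (-1 * (\<Sum>i\<le>k. E i \<omega>)))"
        by (simp flip: exp_add)
      then show ?thesis using True by (simp add: ennreal_mult[symmetric] ind_prod_nonneg)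
    qed simp
  qed
  also have "\<dots> = ennreal (exp t) * ennreal (pi k * q k * mgf (-1) k)"
    using master[OF s, of k] by (subst nn_integral_cmult) simp_all
  finally show ?thesis using pi_pos[of k] q_nonneg[of k] mgf_pos[of "-1" k, OF s]
    by (simp add: emeasure_eq_measure ennreal_mult[symmetric] mult_ac)
qed

lemma measure_G_lower:
  "measure M (G k t) \<ge> pi k * q k * (1 - mgf (-1) k * exp t)"
proof -
  have "G0 k = G k t \<union> G' k t" "G k t \<inter> G' k t = {}" by (auto simp: G0_def G_def G'_def)
  then have "measure M (G0 k) = measure M (G k t) + measure M (G' k t)"
    by (simp add: measure_Union)
  then show ?thesis using measure_G'_upper[of k t] measure_G0[of k] by (simp add: algebra_simps)
qed

definition Lset :: "real \<Rightarrow> 'a set" where "Lset t = {\<omega>\<in>space M. lifetime E B \<omega> > t}"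

lemma lifetime_meas[measurable]: "lifetime E B \<in> borel_measurable M"
proof -
  have "(\<lambda>\<omega>. (\<Sum>i\<le>first_death B \<omega>. E i \<omega>)) \<in> borel_measurable M"
    by (rule measurable_compose_countable[where f="\<lambda>k \<omega>. (\<Sum>i\<le>k. E i \<omega>)"]) (auto simp: first_death_def)
  then show ?thesis by (simp add: lifetime_def[abs_def])
qed

lemma Lset_sets[measurable]: "Lset t \<in> sets M" unfolding Lset_def by measurable

lemma G_sub: "G k t \<subseteq> Lset t"
proof
  fix \<omega> assume w: "\<omega> \<in> G k t"
  then have "first_death B \<omega> = k" unfolding first_death_def G_def
    by (intro Least_equality) (auto, metis not_less zero_neq_one)
  then show "\<omega> \<in> Lset t" using w by (auto simp: Lset_def G_def lifetime_def)
qed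

lemma Lset_sub: "Lset t \<subseteq> H m \<union> (\<Union>k<m. G k t)"
proof
  fix \<omega> assume w: "\<omega> \<in> Lset t"
  then have sp: "\<omega> \<in> space M" by (simp add: Lset_def)
  show "\<omega> \<in> H m \<union> (\<Union>k<m. G k t)"
  proof (cases "\<forall>i<m. B i \<omega> = 1")
    case True then show ?thesis using sp by (simp add: H_def)
  next
    case False
    then obtain i where i: "i < m" "B i \<omega> \<noteq> 1" by auto
    then have Bi: "B i \<omega> = 0" using B_01[OF sp, of i] by auto
    define k where "k = first_death B \<omega>"
    have Bk: "B k \<omega> = 0" unfolding k_def first_death_def by (rule LeastI[of _ i]) (rule Bi)
    have ki: "k \<le> i" unfolding k_def first_death_def by (rule Least_le) (rule Bi)
    have Bj: "B j \<omega> = 1" if "j < k" for j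
    proof -
      have "B j \<omega> \<noteq> 0" using not_less_Least[of j "\<lambda>i. B i \<omega> = 0"] that by (simp add: k_def first_death_def)
      then show ?thesis using B_01[OF sp, of j] by auto
    qed
    have "t < (\<Sum>i\<le>k. E i \<omega>)" using w by (simp add: Lset_def lifetime_def k_def)
    then have "\<omega> \<in> G k t" using sp Bk Bj by (simp add: G_def)
    then show ?thesis using ki i by auto
  qed
qed

lemma L_upper: "measure M (Lset t) \<le> pi m + (\<Sum>k<m. measure M (G k t))"
proof -
  have "measure M (Lset t) \<le> measure M (H m \<union> (\<Union>k<m. G k t))"
    by (rule finite_measure_mono[OF Lset_sub]) measurable
  also have "\<dots> \<le> measure M (H m) + measure M (\<Union>k<m. G k t)"
    by (rule measure_subadditive) auto
  also have "measure M (\<Union>k<m. G k t) \<le> (\<Sum>k<m. measure M (G k t))"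
    by (rule measure_subadditive_finite) auto
  finally show ?thesis by (simp add: measure_H)
qed

lemma L_lower: "measure M (Lset t) \<ge> (\<Sum>k\<in>{n..<N}. measure M (G k t))"
proof -
  have disj: "disjoint_family_on (\<lambda>k. G k t) {n..<N}"
  proof (auto simp: disjoint_family_on_def)
    fix k j x assume "k \<noteq> j" "x \<in> G k t" "x \<in> G j t"
    then show False by (cases "k < j") (auto simp: G_def)
  qed
  have "(\<Sum>k\<in>{n..<N}. measure M (G k t)) = measure M (\<Union>k\<in>{n..<N}. G k t)"
    by (rule finite_measure_finite_Union[symmetric]) (auto intro: disj)
  also have "\<dots> \<le> measure M (Lset t)"
    by (rule finite_measure_mono) (use G_sub in auto)
  finally show ?thesis .
qed

end




lemma prod_upper_exp:
  fixes f g h :: "nat \<Rightarrow> real"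
  assumes f0: "\<And>i. 0 \<le> f i" and fb: "\<And>i. f i \<le> exp (g i + h i)" and h0: "\<And>i. 0 \<le> h i" and hs: "summable h"
  shows "(\<Prod>i<k. f i) \<le> exp ((\<Sum>i<k. g i) + suminf h)"
proof -
  have "(\<Prod>i<k. f i) \<le> exp ((\<Sum>i<k. g i) + (\<Sum>i<k. h i))"
  proof (induction k)
    case 0 then show ?case by simp
  next
    case (Suc k)
    have "(\<Prod>i<Suc k. f i) = (\<Prod>i<k. f i) * f k" by simp
    also have "\<dots> \<le> exp ((\<Sum>i<k. g i) + (\<Sum>i<k. h i)) * exp (g k + h k)"
      by (rule mult_mono[OF Suc fb]) (auto simp: f0 prod_nonneg)
    also have "\<dots> = exp ((\<Sum>i<Suc k. g i) + (\<Sum>i<Suc k. h i))" by (simp add: exp_add[symmetric] algebra_simps)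
    finally show ?case .
  qed
  also have "\<dots> \<le> exp ((\<Sum>i<k. g i) + suminf h)"
    using sum_le_suminf[OF hs, of "{..<k}"] h0 by simp
  finally show ?thesis .
qed

lemma prod_lower_exp:
  fixes f g h :: "nat \<Rightarrow> real"
  assumes fb: "\<And>i. exp (g i - h i) \<le> f i" and h0: "\<And>i. 0 \<le> h i" and hs: "summable h"
  shows "exp ((\<Sum>i<k. g i) - suminf h) \<le> (\<Prod>i<k. f i)"
proof -
  have f0: "\<And>i. 0 \<le> f i" using fb by (meson exp_ge_zero order_trans)
  have "exp ((\<Sum>i<k. g i) - suminf h) \<le> exp ((\<Sum>i<k. g i) - (\<Sum>i<k. h i))"
    using sum_le_suminf[OF hs, of "{..<k}"] h0 by simp
  also have "\<dots> \<le> (\<Prod>i<k. f i)"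
  proof (induction k)
    case 0 then show ?case by simp
  next
    case (Suc k)
    have "exp ((\<Sum>i<Suc k. g i) - (\<Sum>i<Suc k. h i)) = exp ((\<Sum>i<k. g i) - (\<Sum>i<k. h i)) * exp (g k - h k)"
      by (simp add: exp_add[symmetric] algebra_simps)
    also have "\<dots> \<le> (\<Prod>i<k. f i) * f k"
      by (rule mult_mono[OF Suc fb]) (auto simp: prod_nonneg f0)
    finally show ?case by simp
  qed
  finally show ?thesis .
qed

locale bda = bdp +
  fixes dstar :: real
  assumes sum1: "\<not> summable (\<lambda>i. 1 / (b i + d i))"
    and sum2: "\<not> summable (\<lambda>i. d i / (b i + d i))"
    and sum3: "summable (\<lambda>i. 1 / (b i + d i)^2)"
    and d_lim: "d \<longlonglongrightarrow> dstar"
    and dstar_nonneg: "0 \<le> dstar"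
    and dstar_lt_R: "dstar < (INF i. b i + d i)"
begin

definition R :: real where "R = (INF i. a i)"
definition Phi :: "nat \<Rightarrow> real" where "Phi k = (\<Sum>i<k. 1 / a i)"
definition Al :: "nat \<Rightarrow> real" where "Al k = (\<Sum>i<k. (d i - dstar) / a i)"
definition V :: real where "V = (\<Sum>i. 1 / (a i)^2)"

lemma sum3': "summable (\<lambda>i. 1 / (a i)^2)" using sum3 by (simp add: a_def)
lemma V_nonneg: "0 \<le> V" unfolding V_def by (rule suminf_nonneg[OF sum3']) simp

lemma R_le: "R \<le> a i"
  unfolding R_def by (rule cINF_lower) (auto intro!: bdd_belowI[of _ 0] less_imp_le a_pos)
lemma dstar_R: "dstar < R" using dstar_lt_R by (simp add: R_def a_def)
lemma R_pos: "0 < R" using dstar_R dstar_nonneg by simp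

lemma Dm_ex: "\<exists>Dm>0. \<forall>i. \<bar>d i - dstar\<bar> \<le> Dm"
proof -
  have "Bseq (\<lambda>i. d i - dstar)" using d_lim by (intro convergent_imp_Bseq) (auto intro!: convergentI tendsto_diff)
  then obtain K where "K > 0" "\<And>i. norm (d i - dstar) \<le> K" by (auto simp: Bseq_def)
  then show ?thesis by auto
qed

definition Dm :: real where "Dm = (SOME Dm. Dm > 0 \<and> (\<forall>i. \<bar>d i - dstar\<bar> \<le> Dm))"
lemma Dm: "Dm > 0" "\<bar>d i - dstar\<bar> \<le> Dm"
  using someI_ex[OF Dm_ex] by (auto simp: Dm_def)

lemma inv_a_le: "1 / a i \<le> 1 / R" using R_le[of i] R_pos by (simp add: frac_le)

lemma Phi_Suc: "Phi (Suc k) = Phi k + 1 / a k" by (simp add: Phi_def)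
lemma Al_Suc: "Al (Suc k) = Al k + (d k - dstar) / a k" by (simp add: Al_def)
lemma Phi_0[simp]: "Phi 0 = 0" by (simp add: Phi_def)
lemma Phi_mono: "k \<le> j \<Longrightarrow> Phi k \<le> Phi j"
  unfolding Phi_def by (rule sum_mono2) (auto intro: less_imp_le a_pos)
lemma Phi_nonneg: "0 \<le> Phi k" using Phi_mono[of 0 k] by simp

lemma Phi_unbounded: "\<exists>k. T < Phi k"
proof (rule ccontr)
  assume "\<not> ?thesis"
  then have "\<And>k. (\<Sum>i<k. 1 / a i) \<le> T" by (auto simp: Phi_def not_less)
  then have "summable (\<lambda>i. 1 / a i)" by (intro summableI_nonneg_bounded) (auto intro: less_imp_le a_pos)
  then show False using sum1 by (simp add: a_def)
qed

definition sq :: "nat \<Rightarrow> real" where "sq k = (\<Sum>i<k. q i)"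
lemma sq_eq: "sq k = Al k + dstar * Phi k"
  unfolding sq_def Al_def Phi_def q_def by (simp add: sum_distrib_left sum.distrib[symmetric] diff_divide_distrib)

lemma sq_unbounded: "\<exists>k. T < sq k"
proof (rule ccontr)
  assume "\<not> ?thesis"
  then have "\<And>k. (\<Sum>i<k. q i) \<le> T" by (auto simp: sq_def not_less)
  then have "summable q" by (intro summableI_nonneg_bounded) (auto intro: q_nonneg)
  then show False using sum2 by (simp add: q_def[abs_def] a_def)
qed

lemma Al_diff: "k \<le> j \<Longrightarrow> \<bar>Al j - Al k\<bar> \<le> Dm * (Phi j - Phi k)"
proof (induction j rule: dec_induct)
  case base then show ?case by simp
next
  case (step j)
  have "\<bar>(d j - dstar) / a j\<bar> \<le> Dm / a j" using Dm(2)[of j] a_pos[of j] by (simp add: abs_div divide_right_mono)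
  have e: "Al (Suc j) - Al k = (Al j - Al k) + (d j - dstar) / a j" by (simp add: Al_Suc)
  have "\<bar>Al (Suc j) - Al k\<bar> \<le> \<bar>Al j - Al k\<bar> + \<bar>(d j - dstar) / a j\<bar>"
    unfolding e by (rule abs_triangle_ineq)
  then show ?case using step.IH \<open>\<bar>(d j - dstar) / a j\<bar> \<le> Dm / a j\<close> by (simp add: Phi_Suc algebra_simps)
qed

lemma inv_a_lim: "(\<lambda>i. 1 / a i) \<longlonglongrightarrow> 0"
proof -
  have "(\<lambda>i. sqrt (1 / (a i)^2)) \<longlonglongrightarrow> sqrt 0"
    by (intro tendsto_real_sqrt summable_LIMSEQ_zero[OF sum3'])
  moreover have "sqrt (1 / (a i)^2) = 1 / a i" for i using a_pos[of i] by (simp add: real_sqrt_divide)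
  ultimately show ?thesis by simp
qed

lemma q_le: "q i \<le> (dstar + Dm) * (1 / a i)"
  using Dm(2)[of i] a_pos[of i] by (simp add: q_def divide_right_mono)

lemma ev_q_half: "eventually (\<lambda>i. q i \<le> 1/2) sequentially"
proof -
  have pos: "0 < dstar + Dm" using Dm(1) dstar_nonneg by simp
  have "eventually (\<lambda>i. 1 / a i < 1 / (2 * (dstar + Dm))) sequentially"
    by (rule order_tendstoD(2)[OF inv_a_lim]) (use pos in simp)
  then show ?thesis
  proof (rule eventually_mono)
    fix i assume "1 / a i < 1 / (2 * (dstar + Dm))"
    then have "(dstar + Dm) * (1 / a i) \<le> (dstar + Dm) * (1 / (2 * (dstar + Dm)))"
      using pos by (intro mult_left_mono) auto
    moreover have "(dstar + Dm) * (1 / (2 * (dstar + Dm))) = 1/2" using pos by simp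
    ultimately show "q i \<le> 1/2" using q_le[of i] by linarith
  qed
qed

definition w :: "nat \<Rightarrow> real" where "w i = (q i)^2 / p i"
lemma w_nonneg: "0 \<le> w i" using p_pos[of i] by (simp add: w_def)

lemma w_summable: "summable w"
proof (rule summable_comparison_test_ev)
  show "summable (\<lambda>i. 2 * (dstar + Dm)^2 * (1 / (a i)^2))" by (intro summable_mult sum3')
  show "eventually (\<lambda>i. norm (w i) \<le> 2 * (dstar + Dm)^2 * (1 / (a i)^2)) sequentially"
    using ev_q_half
  proof (rule eventually_mono)
    fix i assume qh: "q i \<le> 1/2"
    then have ph: "1/2 \<le> p i" using pq[of i] by simp
    have "(q i)^2 \<le> ((dstar + Dm) * (1 / a i))^2"
      using q_le[of i] q_nonneg[of i] by (intro power_mono) auto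
    also have "\<dots> = (dstar + Dm)^2 * (1 / (a i)^2)" by (simp add: power_mult_distrib power_divide)
    finally have q2: "(q i)^2 \<le> (dstar + Dm)^2 * (1 / (a i)^2)" .
    have "w i \<le> (q i)^2 / (1/2)" unfolding w_def using ph by (intro divide_left_mono) auto
    also have "\<dots> \<le> 2 * (dstar + Dm)^2 * (1 / (a i)^2)" using q2 by simp
    finally show "norm (w i) \<le> 2 * (dstar + Dm)^2 * (1 / (a i)^2)" using w_nonneg[of i] by simp
  qed
qed

definition W :: real where "W = suminf w"

lemma pi_upper: "pi k \<le> exp (- sq k)"
proof -
  have "pi k \<le> exp ((\<Sum>i<k. - q i) + suminf (\<lambda>_. 0::real))"
    unfolding pi_def
  proof (rule prod_upper_exp)
    fix i show "0 \<le> p i" using p_pos[of i] by simp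
    show "p i \<le> exp (- q i + 0)" using exp_ge_add_one_self[of "- q i"] pq[of i] by simp
  qed auto
  then show ?thesis by (simp add: sq_def sum_negf)
qed

lemma pi_lower: "exp (- sq k - W) \<le> pi k"
proof -
  have "exp ((\<Sum>i<k. - q i) - suminf w) \<le> pi k"
    unfolding pi_def
  proof (rule prod_lower_exp[OF _ w_nonneg w_summable])
    fix i
    have pp: "0 < p i" by (rule p_pos)
    have "q i + w i = q i * (p i + q i) / p i" using pp by (simp add: w_def field_simps power2_eq_square)
    also have "\<dots> = q i / p i" using pq[of i] by simp
    finally have e: "- q i - w i = - (q i / p i)" by simp
    have "1 + q i / p i \<le> exp (q i / p i)" by (rule exp_ge_add_one_self)
    moreover have "1 + q i / p i = 1 / p i" using pq[of i] pp by (simp add: field_simps)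
    ultimately have "1 \<le> p i * exp (q i / p i)" using pp by (simp add: field_simps)
    then show "exp (- q i - w i) \<le> p i" unfolding e using pp by (simp add: exp_minus field_simps)
  qed
  then show ?thesis by (simp add: sq_def sum_negf W_def)
qed

lemma pi_Suc: "pi (Suc k) = pi k - pi k * q k"
proof -
  have "pi (Suc k) = pi k * p k" by (simp add: pi_def)
  also have "p k = 1 - q k" using pq[of k] by (simp add: eq_diff_eq)
  finally show ?thesis by (simp add: algebra_simps)
qed

lemma pi_antimono: "k \<le> j \<Longrightarrow> pi j \<le> pi k"
proof (induction j rule: dec_induct)
  case (step j)
  have "pi (Suc j) \<le> pi j" using pi_Suc[of j] pi_pos[of j] q_nonneg[of j] by simp
  then show ?case using step.IH by simp
qed simp

lemma mgf_upper:
  assumes s0: "0 \<le> s" and sR: "s < R"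
  shows "mgf s k \<le> exp (s * Phi (Suc k) + s^2 * R / (R - s) * V)"
proof -
  have "mgf s k = (\<Prod>i<Suc k. a i / (a i - s))" by (simp add: mgf_def lessThan_Suc_atMost)
  also have "\<dots> \<le> exp ((\<Sum>i<Suc k. s / a i) + suminf (\<lambda>i. s^2 * R / (R - s) * (1 / (a i)^2)))"
  proof (rule prod_upper_exp)
    fix i
    have ai: "R \<le> a i" "0 < a i" by (rule R_le, rule a_pos)
    have as: "0 < a i - s" using ai sR by simp
    show "0 \<le> a i / (a i - s)" using ai as by simp
    show "0 \<le> s^2 * R / (R - s) * (1 / (a i)^2)" using sR R_pos by simp
    have "a i / (a i - s) = 1 + s / (a i - s)" using as by (simp add: field_simps)
    also have "\<dots> \<le> exp (s / (a i - s))" by (rule exp_ge_add_one_self)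
    also have "s / (a i - s) \<le> s / a i + s^2 * R / (R - s) * (1 / (a i)^2)"
    proof -
      have "a i * (R - s) \<le> R * (a i - s)" using ai s0 by (simp add: algebra_simps mult_left_mono mult_right_mono)
      then have inv: "1 / (a i - s) \<le> R / ((R - s) * a i)"
        using as ai sR by (simp add: field_simps)
      have "s / (a i - s) = s / a i + (s^2 / a i) * (1 / (a i - s))"
        using as ai by (simp add: field_simps power2_eq_square)
      also have "\<dots> \<le> s / a i + (s^2 / a i) * (R / ((R - s) * a i))"
        using inv ai by (intro add_left_mono mult_left_mono) auto
      also have "\<dots> = s / a i + s^2 * R / (R - s) * (1 / (a i)^2)"
        by (simp add: power2_eq_square field_simps)
      finally show ?thesis .
    qed
    then show "a i / (a i - s) \<le> exp (s / a i + s^2 * R / (R - s) * (1 / (a i)^2))"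
      using exp_le_cancel_iff calculation by (meson order_trans)
    show "summable (\<lambda>i. s^2 * R / (R - s) * (1 / (a i)^2))" by (intro summable_mult sum3')
  qed
  also have "suminf (\<lambda>i. s^2 * R / (R - s) * (1 / (a i)^2)) = s^2 * R / (R - s) * V"
    by (simp only: V_def suminf_mult[OF sum3'])
  also have "(\<Sum>i<Suc k. s / a i) = s * Phi (Suc k)"
    unfolding Phi_def sum_distrib_left by simp
  finally show ?thesis .
qed

lemma mgf_m1: "mgf (-1) k \<le> exp (- Phi (Suc k) + V)"
proof -
  have "mgf (-1) k = (\<Prod>i<Suc k. a i / (a i + 1))" by (simp add: mgf_def lessThan_Suc_atMost)
  also have "\<dots> \<le> exp ((\<Sum>i<Suc k. - (1 / a i)) + suminf (\<lambda>i. 1 / (a i)^2))"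
  proof (rule prod_upper_exp[OF _ _ _ sum3'])
    fix i
    have ai: "0 < a i" by (rule a_pos)
    show "0 \<le> a i / (a i + 1)" using ai by simp
    show "0 \<le> 1 / (a i)^2" by simp
    have "1 - 1 / (a i + 1) \<le> exp (- (1 / (a i + 1)))" using exp_ge_add_one_self[of "- (1 / (a i + 1))"] by simp
    moreover have "1 - 1 / (a i + 1) = a i / (a i + 1)" using ai by (simp add: field_simps)
    moreover have "- (1 / (a i + 1)) \<le> - (1 / a i) + 1 / (a i)^2"
      using ai by (simp add: field_simps power2_eq_square)
    ultimately show "a i / (a i + 1) \<le> exp (- (1 / a i) + 1 / (a i)^2)"
      by (metis exp_le_cancel_iff order_trans)
  qed
  also have "\<dots> = exp (- Phi (Suc k) + V)"
    by (simp add: Phi_def V_def sum_negf)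
  finally show ?thesis .
qed

lemma lin_interp_eq:
  assumes "0 \<le> x"
  shows "lin_interp f x = f (nat \<lfloor>x\<rfloor>) + (x - real (nat \<lfloor>x\<rfloor>)) * (f (Suc (nat \<lfloor>x\<rfloor>)) - f (nat \<lfloor>x\<rfloor>))"
  using assms by (simp add: lin_interp_def)

lemma floor_facts:
  assumes "0 \<le> x"
  shows "real (nat \<lfloor>x\<rfloor>) \<le> x" "x < real (nat \<lfloor>x\<rfloor>) + 1"
  using assms by linarith+

lemma Phi_fun: "(\<lambda>k. \<Sum>i<k. 1 / (b i + d i)) = Phi" by (simp add: Phi_def a_def fun_eq_iff)
lemma Al_fun: "(\<lambda>k. \<Sum>i<k. (d i - dstar) / (b i + d i)) = Al" by (simp add: Al_def a_def fun_eq_iff)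

lemma phi1_eq: "0 \<le> x \<Longrightarrow> phi1 b d x = Phi (nat \<lfloor>x\<rfloor>) + (x - real (nat \<lfloor>x\<rfloor>)) / a (nat \<lfloor>x\<rfloor>)"
  unfolding phi1_def Phi_fun by (simp add: lin_interp_eq Phi_Suc)

lemma alpha_eq: "0 \<le> x \<Longrightarrow> alpha_fun b d dstar x = Al (nat \<lfloor>x\<rfloor>) + (x - real (nat \<lfloor>x\<rfloor>)) * ((d (nat \<lfloor>x\<rfloor>) - dstar) / a (nat \<lfloor>x\<rfloor>))"
  unfolding alpha_fun_def Al_fun by (simp add: lin_interp_eq Al_Suc)

lemma phi1_bounds:
  assumes "0 \<le> x"
  shows "Phi (nat \<lfloor>x\<rfloor>) \<le> phi1 b d x" "phi1 b d x < Phi (Suc (nat \<lfloor>x\<rfloor>))"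
proof -
  let ?m = "nat \<lfloor>x\<rfloor>"
  have f: "real ?m \<le> x" "x < real ?m + 1" using floor_facts[OF assms] by auto
  have ap: "0 < a ?m" by (rule a_pos)
  show "Phi ?m \<le> phi1 b d x" using f ap by (simp add: phi1_eq[OF assms])
  have "x - real ?m < 1" using f(2) by linarith
  then have "(x - real ?m) / a ?m < 1 / a ?m" using ap by (rule divide_strict_right_mono)
  then show "phi1 b d x < Phi (Suc ?m)" unfolding phi1_eq[OF assms] Phi_Suc by simp
qed

lemma phi1_inj: "inj_on (phi1 b d) {0..}"
proof (rule inj_onI)
  fix x y :: real assume x: "x \<in> {0..}" and y: "y \<in> {0..}" and e: "phi1 b d x = phi1 b d y"
  have nlt: False if "nat \<lfloor>u\<rfloor> < nat \<lfloor>v\<rfloor>" "0 \<le> u" "0 \<le> v" "phi1 b d u = phi1 b d v" for u v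
  proof -
    have "phi1 b d u < Phi (Suc (nat \<lfloor>u\<rfloor>))" by (rule phi1_bounds(2)[OF that(2)])
    also have "\<dots> \<le> Phi (nat \<lfloor>v\<rfloor>)" using Suc_leI[OF that(1)] by (rule Phi_mono)
    also have "\<dots> \<le> phi1 b d v" by (rule phi1_bounds(1)[OF that(3)])
    finally show False using that(4) by simp
  qed
  have m: "nat \<lfloor>x\<rfloor> = nat \<lfloor>y\<rfloor>"
  proof (rule ccontr)
    have xy: "0 \<le> x" "0 \<le> y" using x y by auto
    assume "nat \<lfloor>x\<rfloor> \<noteq> nat \<lfloor>y\<rfloor>"
    then consider "nat \<lfloor>x\<rfloor> < nat \<lfloor>y\<rfloor>" | "nat \<lfloor>y\<rfloor> < nat \<lfloor>x\<rfloor>" by linarith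
    then show False
    proof cases
      case 1 then show False using nlt[of x y] xy e by blast
    next
      case 2 then show False using nlt[of y x] xy e by simp
    qed
  qed
  show "x = y" using e x y a_pos[of "nat \<lfloor>x\<rfloor>"] by (simp add: phi1_eq m)
qed

lemma K_approx:
  assumes t: "0 \<le> t"
  shows "\<exists>m. Phi m \<le> t \<and> t < Phi (Suc m) \<and> \<bar>K_alpha b d dstar t - Al m\<bar> \<le> Dm / R"
proof -
  obtain k0 where k0: "t < Phi k0" using Phi_unbounded[of t] by blast
  have k: "t < Phi (Suc k0)" using k0 Phi_mono[of k0 "Suc k0"] by simp
  define m where "m = (LEAST m. t < Phi (Suc m))"
  have m1: "t < Phi (Suc m)" unfolding m_def by (rule LeastI[of _ k0]) (rule k)
  have m0: "Phi m \<le> t"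
  proof (cases m)
    case 0 then show ?thesis using t by simp
  next
    case (Suc m')
    have "\<not> t < Phi (Suc m')" using not_less_Least[of m' "\<lambda>m. t < Phi (Suc m)"] Suc by (simp add: m_def)
    then show ?thesis using Suc by simp
  qed
  have ap: "0 < a m" by (rule a_pos)
  define x where "x = real m + (t - Phi m) * a m"
  have d0: "0 \<le> (t - Phi m) * a m" using m0 ap by simp
  have d1: "(t - Phi m) * a m < 1" using m1 ap by (simp add: Phi_Suc field_simps)
  have x0: "0 \<le> x" using d0 by (simp add: x_def)
  have fl: "\<lfloor>x\<rfloor> = int m" unfolding x_def by (rule floor_unique) (use d0 d1 in auto)
  then have nfl: "nat \<lfloor>x\<rfloor> = m" by simp
  have px: "phi1 b d x = t" unfolding phi1_eq[OF x0] nfl using ap by (simp add: x_def)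
  have inv: "the_inv_into {0..} (phi1 b d) t = x"
    by (rule the_inv_into_f_eq[OF phi1_inj px]) (use x0 in simp)
  have K: "K_alpha b d dstar t = Al m + (x - real m) * ((d m - dstar) / a m)"
    by (simp add: K_alpha_def inv alpha_eq[OF x0] nfl)
  have xm: "0 \<le> x - real m" "x - real m \<le> 1" using d0 d1 by (auto simp: x_def)
  have "\<bar>(d m - dstar) / a m\<bar> \<le> Dm / R"
  proof -
    have "\<bar>(d m - dstar) / a m\<bar> = \<bar>d m - dstar\<bar> * (1 / a m)" using ap by simp
    also have "\<dots> \<le> Dm * (1 / R)" using Dm(2)[of m] inv_a_le[of m] Dm(1) ap by (intro mult_mono) auto
    finally show ?thesis by simp
  qed
  then have "\<bar>x - real m\<bar> * \<bar>(d m - dstar) / a m\<bar> \<le> 1 * (Dm / R)"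
    using xm by (intro mult_mono) auto
  then have "\<bar>(x - real m) * ((d m - dstar) / a m)\<bar> \<le> Dm / R"
    by (simp add: abs_mult)
  then show ?thesis using K m0 m1 by auto
qed

definition lam :: real where "lam = (dstar + R) / 2"
definition eta :: real where "eta = (R - dstar) / 4"
lemma eta_pos: "0 < eta" using dstar_R by (simp add: eta_def)
lemma lam_facts: "0 \<le> lam" "lam < R" "lam - dstar = 2 * eta"
  using dstar_R dstar_nonneg by (auto simp: lam_def eta_def)

definition Nd :: nat where "Nd = (SOME N. \<forall>i\<ge>N. d i - dstar \<le> eta)"
lemma Nd: "i \<ge> Nd \<Longrightarrow> d i - dstar \<le> eta"
proof -
  have "eventually (\<lambda>i. d i < dstar + eta) sequentially"
    by (rule order_tendstoD(2)[OF d_lim]) (use eta_pos in simp)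
  then obtain N where "\<forall>i\<ge>N. d i < dstar + eta" by (auto simp: eventually_sequentially)
  then have "\<exists>N. \<forall>i\<ge>N. d i - dstar \<le> eta" by (intro exI[of _ N]) force
  from someI_ex[OF this] show "i \<ge> Nd \<Longrightarrow> d i - dstar \<le> eta" unfolding Nd_def by blast
qed

definition cc :: "nat \<Rightarrow> real" where "cc i = (if i < Nd then \<bar>d i - dstar\<bar> / a i else 0)"
definition C2 :: real where "C2 = (\<Sum>i<Nd. cc i)"
lemma cc_nonneg: "0 \<le> cc i" using a_pos[of i] by (simp add: cc_def)

lemma cc_sum_le: "finite S \<Longrightarrow> (\<Sum>i\<in>S. cc i) \<le> C2"
proof -
  assume S: "finite S"
  have "(\<Sum>i\<in>S. cc i) = (\<Sum>i\<in>S \<inter> {..<Nd}. cc i)"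
    by (rule sum.mono_neutral_right) (auto simp: S cc_def)
  also have "\<dots> \<le> (\<Sum>i<Nd. cc i)" by (rule sum_mono2) (auto simp: cc_nonneg)
  finally show ?thesis by (simp add: C2_def)
qed

lemma term_bound: "(d i - dstar) / a i \<le> eta / a i + cc i"
proof (cases "i < Nd")
  case True
  have "(d i - dstar) / a i \<le> \<bar>d i - dstar\<bar> / a i" using a_pos[of i] by (simp add: divide_right_mono)
  moreover have "0 \<le> eta / a i" using eta_pos a_pos[of i] by simp
  ultimately show ?thesis using True by (simp add: cc_def)
next
  case False
  then show ?thesis using Nd[of i] a_pos[of i] by (simp add: cc_def divide_right_mono)
qed

lemma Al_eta: "k \<le> m \<Longrightarrow> Al m - Al k \<le> eta * (Phi m - Phi k) + C2"
proof -
  assume km: "k \<le> m"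
  have "Al m - Al k \<le> eta * (Phi m - Phi k) + (\<Sum>i\<in>{k..<m}. cc i)"
    using km
  proof (induction m rule: dec_induct)
    case (step j)
    have "Al (Suc j) - Al k = (Al j - Al k) + (d j - dstar) / a j" by (simp add: Al_Suc)
    also have "\<dots> \<le> eta * (Phi j - Phi k) + (\<Sum>i\<in>{k..<j}. cc i) + (eta / a j + cc j)"
      using step.IH term_bound[of j] by simp
    also have "\<dots> = eta * (Phi (Suc j) - Phi k) + (\<Sum>i\<in>{k..<Suc j}. cc i)"
      using step.hyps by (simp add: Phi_Suc algebra_simps)
    finally show ?case .
  qed simp
  then show ?thesis using cc_sum_le[of "{k..<m}"] by simp
qed

lemma telescope: "(\<Sum>k<m. (1 / a k) * exp (eta * Phi k)) \<le> exp (eta * Phi m) / eta"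
proof -
  have "(\<Sum>k<m. (1 / a k) * exp (eta * Phi k)) \<le> (\<Sum>k<m. (exp (eta * Phi (Suc k)) - exp (eta * Phi k)) / eta)"
  proof (rule sum_mono)
    fix k
    have "1 + eta / a k \<le> exp (eta / a k)" by (rule exp_ge_add_one_self)
    then have "exp (eta * Phi k) * (1 + eta / a k) \<le> exp (eta * Phi k) * exp (eta / a k)" by simp
    then have "exp (eta * Phi k) * (eta / a k) \<le> exp (eta * Phi (Suc k)) - exp (eta * Phi k)"
      by (simp add: Phi_Suc distrib_left exp_add algebra_simps)
    then show "(1 / a k) * exp (eta * Phi k) \<le> (exp (eta * Phi (Suc k)) - exp (eta * Phi k)) / eta"
      using eta_pos by (simp add: field_simps)
  qed
  also have "\<dots> = (exp (eta * Phi m) - 1) / eta"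
    using sum_lessThan_telescope[of "\<lambda>k. exp (eta * Phi k)" m] by (simp add: sum_divide_distrib[symmetric])
  also have "\<dots> \<le> exp (eta * Phi m) / eta" using eta_pos by (simp add: divide_right_mono)
  finally show ?thesis .
qed


definition C1 :: real where "C1 = lam^2 * R / (R - lam) * V"
definition Cu :: real where "Cu = exp (dstar / R) + exp (C1 + C2 + lam / R) * (dstar + Dm) / eta"

lemma Phi_m_lower: "t < Phi (Suc m) \<Longrightarrow> t - 1 / R \<le> Phi m"
  using inv_a_le[of m] by (simp add: Phi_Suc)

lemma upper_bound:
  assumes t: "0 \<le> t" and m0: "Phi m \<le> t" and m1: "t < Phi (Suc m)"
  shows "measure M (Lset t) \<le> exp (- Al m - dstar * t) * Cu"
proof -
  define Z where "Z = exp (- Al m - dstar * t)"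
  define Kc where "Kc = exp (C1 + C2 + lam / R) * (dstar + Dm)"
  have lamR: "\<And>i. lam < a i" using lam_facts(2) R_le less_le_trans by blast
  have pim: "pi m \<le> Z * exp (dstar / R)"
  proof -
    have "pi m \<le> exp (- sq m)" by (rule pi_upper)
    also have "\<dots> \<le> exp (- Al m - dstar * t + dstar / R)"
    proof -
      have "dstar * (t - 1 / R) \<le> dstar * Phi m" using Phi_m_lower[OF m1] dstar_nonneg by (rule mult_left_mono)
      then show ?thesis by (simp add: sq_eq algebra_simps)
    qed
    finally show ?thesis by (simp add: Z_def exp_add)
  qed
  have Gk: "measure M (G k t) \<le> Z * Kc * ((1 / a k) * exp (eta * Phi k)) * exp (- eta * t)" if km: "k < m" for k
  proof -
    have "measure M (G k t) \<le> pi k * q k * mgf lam k * exp (- lam * t)"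
      by (rule measure_G_upper[OF lam_facts(1) lamR])
    also have "\<dots> \<le> exp (- sq k) * ((dstar + Dm) * (1 / a k)) * exp (lam * Phi (Suc k) + C1) * exp (- lam * t)"
    proof -
      have "mgf lam k \<le> exp (lam * Phi (Suc k) + C1)"
        using mgf_upper[OF lam_facts(1) lam_facts(2)] by (simp add: C1_def)
      moreover have "pi k * q k \<le> exp (- sq k) * ((dstar + Dm) * (1 / a k))"
        by (rule mult_mono[OF pi_upper q_le]) (auto simp: q_nonneg)
      moreover have "0 \<le> exp (- sq k) * ((dstar + Dm) * (1 / a k))"
        using Dm(1) dstar_nonneg a_pos[of k] by simp
      ultimately have "pi k * q k * mgf lam k \<le> (exp (- sq k) * ((dstar + Dm) * (1 / a k))) * exp (lam * Phi (Suc k) + C1)"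
        using mgf_pos[of lam k, OF lamR]
        by (rule_tac mult_mono) auto
      then show ?thesis by (intro mult_right_mono) auto
    qed
    also have "\<dots> = (dstar + Dm) * (1 / a k) * exp (- Al k - dstar * Phi k + lam * Phi (Suc k) + C1 - lam * t)"
      by (simp add: sq_eq exp_add[symmetric] exp_diff mult_ac) (simp add: exp_diff exp_add exp_minus field_simps)
    also have "\<dots> \<le> (dstar + Dm) * (1 / a k) * exp (- Al m - dstar * t + (C1 + C2 + lam / R) + eta * Phi k - eta * t)"
    proof -
      have A: "Al m - Al k \<le> eta * (Phi m - Phi k) + C2" using km by (intro Al_eta) simp
      have B: "eta * (Phi m - Phi k) \<le> eta * (t - Phi k)" using m0 eta_pos by (intro mult_left_mono) auto
      have Cc: "lam * Phi (Suc k) \<le> lam * Phi k + lam / R"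
        using mult_left_mono[OF inv_a_le[of k] lam_facts(1)] by (simp add: Phi_Suc algebra_simps)
      have D1: "lam * Phi k = dstar * Phi k + 2 * eta * Phi k" "lam * t = dstar * t + 2 * eta * t"
        using lam_facts(3) by (simp_all add: algebra_simps flip: lam_facts(3))
      have "- Al k - dstar * Phi k + lam * Phi (Suc k) + C1 - lam * t \<le> - Al m - dstar * t + (C1 + C2 + lam / R) + eta * Phi k - eta * t"
        using A B Cc D1 by (simp add: algebra_simps)
      then show ?thesis using Dm(1) dstar_nonneg a_pos[of k] by (intro mult_left_mono) auto
    qed
    also have "\<dots> = Z * Kc * ((1 / a k) * exp (eta * Phi k)) * exp (- eta * t)"
      by (simp add: Z_def Kc_def exp_add[symmetric] exp_diff) (simp add: exp_diff exp_add exp_minus field_simps)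
    finally show ?thesis .
  qed
  have "measure M (Lset t) \<le> pi m + (\<Sum>k<m. measure M (G k t))" by (rule L_upper)
  also have "\<dots> \<le> Z * exp (dstar / R) + (\<Sum>k<m. Z * Kc * ((1 / a k) * exp (eta * Phi k)) * exp (- eta * t))"
    using pim Gk by (intro add_mono sum_mono) auto
  also have "(\<Sum>k<m. Z * Kc * ((1 / a k) * exp (eta * Phi k)) * exp (- eta * t)) = Z * Kc * exp (- eta * t) * (\<Sum>k<m. (1 / a k) * exp (eta * Phi k))"
    by (simp add: sum_distrib_left mult_ac)
  also have "\<dots> \<le> Z * Kc * exp (- eta * t) * (exp (eta * Phi m) / eta)"
    using Dm(1) dstar_nonneg by (intro mult_left_mono telescope) (auto simp: Z_def Kc_def)
  also have "\<dots> \<le> Z * Kc * exp (- eta * t) * (exp (eta * t) / eta)"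
    using Dm(1) dstar_nonneg eta_pos m0 by (intro mult_left_mono divide_right_mono) (auto simp: Z_def Kc_def)
  also have "Z * Kc * exp (- eta * t) * (exp (eta * t) / eta) = Z * Kc / eta"
    by (simp add: exp_minus field_simps)
  finally show ?thesis by (simp add: Cu_def Kc_def Z_def field_simps)
qed


definition Cl :: real where "Cl = Dm * (V + 2 + 2 / R) + dstar * (V + 2 + 1 / R) + W + ln 4"

lemma lower_bound:
  assumes t: "0 \<le> t" and m0: "Phi m \<le> t" and m1: "t < Phi (Suc m)"
  shows "exp (- Al m - dstar * t - Cl) \<le> measure M (Lset t)"
proof -
  let ?T = "t + V + 2"
  obtain n0 where n0: "?T \<le> Phi n0" using Phi_unbounded[of ?T] by (auto intro: less_imp_le)
  define n where "n = (LEAST n. ?T \<le> Phi n)"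
  have n1: "?T \<le> Phi n" unfolding n_def by (rule LeastI[of _ n0]) (rule n0)
  have nz: "n \<noteq> 0"
  proof
    assume "n = 0"
    then show False using n1 t V_nonneg by simp
  qed
  then obtain n' where n': "n = Suc n'" by (cases n) auto
  have "\<not> ?T \<le> Phi n'" using not_less_Least[of n' "\<lambda>n. ?T \<le> Phi n"] n' by (simp add: n_def)
  then have n2: "Phi n \<le> ?T + 1 / R" using inv_a_le[of n'] by (simp add: n' Phi_Suc)
  have mn: "m \<le> n"
  proof (rule ccontr)
    assume "\<not> m \<le> n"
    then have "Phi n \<le> Phi m" by (intro Phi_mono) simp
    then show False using n1 m0 V_nonneg by simp
  qed
  have Gk: "pi k * q k / 2 \<le> measure M (G k t)" if kn: "n \<le> k" for k
  proof -
    have "mgf (-1) k * exp t \<le> exp (- Phi (Suc k) + V) * exp t"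
      by (rule mult_right_mono[OF mgf_m1]) simp
    also have "\<dots> = exp (- Phi (Suc k) + V + t)" by (simp add: exp_add)
    also have "\<dots> \<le> exp (-2)"
      using Phi_mono[of n "Suc k"] kn n1 by simp
    also have "\<dots> \<le> 1 / 2"
    proof -
      have "1 + 2 \<le> exp (2::real)" by (rule exp_ge_add_one_self)
      then show ?thesis by (simp add: exp_minus field_simps)
    qed
    finally have "1 / 2 \<le> 1 - mgf (-1) k * exp t" by simp
    then have "pi k * q k * (1 / 2) \<le> pi k * q k * (1 - mgf (-1) k * exp t)"
      using pi_pos[of k] q_nonneg[of k] by (intro mult_left_mono) auto
    also have "\<dots> \<le> measure M (G k t)" by (rule measure_G_lower)
    finally show ?thesis by simp
  qed
  have pin: "0 < pi n" by (rule pi_pos)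
  obtain N0 where N0: "- ln (pi n / 2) < sq N0" using sq_unbounded by blast
  define N where "N = max N0 n"
  have piN: "pi N \<le> pi n / 2"
  proof -
    have "pi N \<le> pi N0" unfolding N_def by (rule pi_antimono) simp
    also have "\<dots> \<le> exp (- sq N0)" by (rule pi_upper)
    also have "\<dots> \<le> exp (ln (pi n / 2))" using N0 by simp
    also have "\<dots> = pi n / 2" using pin by simp
    finally show ?thesis .
  qed
  have nN: "n \<le> N" by (simp add: N_def)
  have tele: "(\<Sum>k\<in>{n..<N}. pi k * q k) = pi n - pi N"
  proof -
    have "(\<Sum>k\<in>{n..<N}. pi k * q k) = - (\<Sum>k\<in>{n..<N}. pi (Suc k) - pi k)"
      by (simp add: sum_negf[symmetric] pi_Suc)
    also have "\<dots> = pi n - pi N" using sum_Suc_diff'[OF nN, of pi] by simp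
    finally show ?thesis .
  qed
  have "pi n / 4 \<le> (pi n - pi N) / 2" using piN by simp
  also have "\<dots> = (\<Sum>k\<in>{n..<N}. pi k * q k / 2)" by (simp add: tele sum_divide_distrib[symmetric])
  also have "\<dots> \<le> (\<Sum>k\<in>{n..<N}. measure M (G k t))" using Gk by (intro sum_mono) auto
  also have "\<dots> \<le> measure M (Lset t)" by (rule L_lower)
  finally have P: "pi n / 4 \<le> measure M (Lset t)" .
  have "exp (- Al m - dstar * t - Cl) \<le> exp (- sq n - W) / 4"
  proof -
    have "\<bar>Al n - Al m\<bar> \<le> Dm * (Phi n - Phi m)" by (rule Al_diff[OF mn])
    moreover have "Dm * (Phi n - Phi m) \<le> Dm * (V + 2 + 2 / R)"
      using n2 Phi_m_lower[OF m1] Dm(1) by (intro mult_left_mono) auto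
    moreover have "dstar * Phi n \<le> dstar * (t + (V + 2 + 1 / R))"
      using n2 dstar_nonneg by (intro mult_left_mono) auto
    ultimately have "- Al m - dstar * t - Cl \<le> - sq n - W - ln 4"
      by (simp add: Cl_def sq_eq algebra_simps)
    then have "exp (- Al m - dstar * t - Cl) \<le> exp (- sq n - W - ln 4)" by simp
    also have "\<dots> = exp (- sq n - W) / 4" by (simp add: exp_diff)
    finally show ?thesis .
  qed
  also have "\<dots> \<le> pi n / 4" using pi_lower[of n] by simp
  finally show ?thesis using P by simp
qed

lemma main_bound:
  "\<exists>C. \<forall>t\<ge>0. measure M (Lset t) > 0 \<and> \<bar>ln (measure M (Lset t)) + dstar * t + K_alpha b d dstar t\<bar> \<le> C"
proof (intro exI allI impI conjI)
  fix t :: real assume t: "0 \<le> t"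
  obtain m where m0: "Phi m \<le> t" and m1: "t < Phi (Suc m)" and K: "\<bar>K_alpha b d dstar t - Al m\<bar> \<le> Dm / R"
    using K_approx[OF t] by blast
  have lo: "exp (- Al m - dstar * t - Cl) \<le> measure M (Lset t)" by (rule lower_bound[OF t m0 m1])
  have up: "measure M (Lset t) \<le> exp (- Al m - dstar * t) * Cu" by (rule upper_bound[OF t m0 m1])
  show pos: "measure M (Lset t) > 0" using lo by (meson exp_gt_zero less_le_trans)
  have Cu_pos: "0 < Cu" unfolding Cu_def using Dm(1) dstar_nonneg eta_pos
    by (intro add_pos_nonneg) auto
  have l1: "- Al m - dstar * t - Cl \<le> ln (measure M (Lset t))"
    using lo pos by (metis ln_exp ln_le_cancel_iff exp_gt_zero)
  have "ln (measure M (Lset t)) \<le> ln (exp (- Al m - dstar * t) * Cu)"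
    using up pos Cu_pos by (subst ln_le_cancel_iff) auto
  also have "\<dots> = - Al m - dstar * t + ln Cu" using Cu_pos by (simp add: ln_mult)
  finally have l2: "ln (measure M (Lset t)) \<le> - Al m - dstar * t + ln Cu" .
  show "\<bar>ln (measure M (Lset t)) + dstar * t + K_alpha b d dstar t\<bar> \<le> max Cl (ln Cu) + Dm / R"
    using l1 l2 K by (simp add: abs_le_iff) linarith
qed

end


theorem lemma5p6:
  fixes M :: "'a measure"
    and E B :: "nat \<Rightarrow> 'a \<Rightarrow> real"
    and b d :: "nat \<Rightarrow> real"
    and dstar lstar :: real
    and r :: "real \<Rightarrow> real"
  assumes P: "prob_space M"
    and indep: "prob_space.indep_vars M (\<lambda>_. borel) (case_sum E B) UNIV"
    and E_distr: "\<And>i. distributed M lborel (E i) (exponential_density (b i + d i))"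
    and B_meas: "\<And>i. B i \<in> borel_measurable M"
    and B_01: "\<And>i \<omega>. \<omega> \<in> space M \<Longrightarrow> B i \<omega> \<in> {0, 1}"
    and B_prob: "\<And>i. measure M {\<omega> \<in> space M. B i \<omega> = 1} = b i / (b i + d i)"
    and b_pos: "\<And>i. b i > 0"
    and d_nonneg: "\<And>i. d i \<ge> 0"
    and sum1: "\<not> summable (\<lambda>i. 1 / (b i + d i))"
    and sum2: "\<not> summable (\<lambda>i. d i / (b i + d i))"
    and sum3: "summable (\<lambda>i. 1 / (b i + d i)^2)"
    and d_lim: "d \<longlonglongrightarrow> dstar"
    and dstar_nonneg: "0 \<le> dstar"
    and dstar_lt_R: "dstar < (INF i. b i + d i)"
    and lstar_pos: "lstar > 0"
    and r_range: "\<And>t. t > 0 \<Longrightarrow> r t \<ge> 0"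
    and r_cond: "(\<lambda>t. K_alpha b d dstar (lstar / (lstar + dstar) * t
                     - K_alpha b d dstar (r t) / (lstar + dstar))
                   - K_alpha b d dstar (r t)) \<in> O[at_top](\<lambda>_. 1)"
  shows "\<exists>C. \<forall>t\<ge>0. measure M {\<omega> \<in> space M. lifetime E B \<omega> > t} > 0 \<and>
           \<bar>ln (measure M {\<omega> \<in> space M. lifetime E B \<omega> > t}) + dstar * t
              + K_alpha b d dstar t\<bar> \<le> C"
  proof -
  interpret bda M E B b d dstar
  proof -
    interpret prob_space M by (rule P)
    show "bda M E B b d dstar"
      by (unfold_locales) (use indep E_distr B_meas B_01 B_prob b_pos d_nonneg sum1 sum2 sum3 d_lim dstar_nonneg dstar_lt_R in auto)
  qed
  show ?thesis using main_bound by (simp add: Lset_def)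
qed

end
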